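(* Let $F$ be a field of characteristic zero and $n,m$ natural numbers. If an ideal $I$ of $W(n,m)$ contains $\partial_i$ for some $1\le i\le n+m$, then $I=W(n,m)$.
   Context: $W(n,m)$ has basis $e^{\alpha}x^{\beta}\partial_i$ ($\alpha\in\mathbb Z^n$, $\beta\in\mathbb Z^{n+m}$, $1\le i\le n+m$), realized as vector fields $f\partial_i$ with $f$ in the commutative algebra with basis $e^{\alpha}x^{\beta}$ (multiplication adding exponents), $\partial_i(e^{\alpha}x^{\beta})=a_ie^{\alpha}x^{\beta}+b_ie^{\alpha}x^{\beta-\epsilon_i}$ with $a_i:=0$ for $i>n$, and bracket $[f\partial_i,g\partial_j]=f\partial_i(g)\partial_j-g\partial_j(f)\partial_i$; $\partial_i$ denotes the basis element $e^{0}x^{0}\partial_i$. *)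

theory Defs
  imports Main "HOL-Library.Function_Algebras"
begin

text \<open>Basis index (alpha, beta, i) of e^alpha x^beta d_i; alpha, beta are integer vectors
  encoded as functions nat => int vanishing outside {0..<n} resp. {0..<n+m};
  i is 0-based, i < n+m.\<close>
type_synonym widx = "(nat \<Rightarrow> int) \<times> (nat \<Rightarrow> int) \<times> nat"

definition Bidx :: "nat \<Rightarrow> nat \<Rightarrow> widx set" where
  "Bidx n m = {(a, b, i). (\<forall>k\<ge>n. a k = 0) \<and> (\<forall>k\<ge>n+m. b k = 0) \<and> i < n + m}"

definition Wset :: "nat \<Rightarrow> nat \<Rightarrow> (widx \<Rightarrow> 'a::field) set" where
  "Wset n m = {u. finite {p. u p \<noteq> 0} \<and> (\<forall>p. u p \<noteq> 0 \<longrightarrow> p \<in> Bidx n m)}"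

definition bv :: "widx \<Rightarrow> widx \<Rightarrow> 'a::field" where
  "bv r = (\<lambda>s. if s = r then 1 else 0)"

definition smul :: "'a::field \<Rightarrow> (widx \<Rightarrow> 'a) \<Rightarrow> (widx \<Rightarrow> 'a)" where
  "smul c u = (\<lambda>s. c * u s)"

text \<open>Bracket of basis elements:
 [e^a x^b d_i, e^c x^d d_j] = c_i e^(a+c) x^(b+d) d_j + d_i e^(a+c) x^(b+d-eps_i) d_j
   - a_j e^(a+c) x^(b+d) d_i - b_j e^(a+c) x^(b+d-eps_j) d_i
 (a_k = c_k = 0 for k >= n automatically, matching a_i := 0 for i > n).\<close>
definition br_basis :: "widx \<Rightarrow> widx \<Rightarrow> widx \<Rightarrow> 'a::field" where
  "br_basis p q = (case p of (a, b, i) \<Rightarrow> case q of (c, d, j) \<Rightarrow>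
      let s = (\<lambda>k. a k + c k); t = (\<lambda>k. b k + d k) in
        smul (of_int (c i)) (bv (s, t, j))
      + smul (of_int (d i)) (bv (s, t(i := t i - 1), j))
      - smul (of_int (a j)) (bv (s, t, i))
      - smul (of_int (b j)) (bv (s, t(j := t j - 1), i)))"

definition wbracket :: "(widx \<Rightarrow> 'a::field) \<Rightarrow> (widx \<Rightarrow> 'a) \<Rightarrow> (widx \<Rightarrow> 'a)" where
  "wbracket u v = (\<Sum>p\<in>{p. u p \<noteq> 0}. \<Sum>q\<in>{q. v q \<noteq> 0}. smul (u p * v q) (br_basis p q))"

text \<open>The basis element d_i = e^0 x^0 d_i (0-based index i).\<close>
definition wpartial :: "nat \<Rightarrow> widx \<Rightarrow> 'a::field" where
  "wpartial i = bv (\<lambda>_. 0, \<lambda>_. 0, i)"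

definition is_W_ideal :: "nat \<Rightarrow> nat \<Rightarrow> (widx \<Rightarrow> 'a::field) set \<Rightarrow> bool" where
  "is_W_ideal n m I \<longleftrightarrow> I \<subseteq> Wset n m \<and> 0 \<in> I
     \<and> (\<forall>u\<in>I. \<forall>v\<in>I. u + v \<in> I)
     \<and> (\<forall>c. \<forall>u\<in>I. smul c u \<in> I)
     \<and> (\<forall>w\<in>Wset n m. \<forall>u\<in>I. wbracket w u \<in> I)"

end

theory Submission
  imports Defs
begin

lemma sum_fun_app: "finite S \<Longrightarrow> (\<Sum>p\<in>S. f p) x = (\<Sum>p\<in>S. f p x)"
  by (induction S rule: finite_induct) auto

lemma supp_bv: "{s. (bv r s :: 'a::field) \<noteq> 0} = {r}"
  by (auto simp: bv_def)

lemma smul_one: "smul 1 u = u"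
  by (simp add: smul_def)

lemma wbracket_bv: "wbracket (bv p) (bv q) = (br_basis p q :: widx \<Rightarrow> 'a::field)"
  unfolding wbracket_def by (simp add: supp_bv bv_def smul_one)

definition eps :: "nat \<Rightarrow> nat \<Rightarrow> int" where "eps j = (\<lambda>_. 0)(j := 1)"

lemma brA: "br_basis (\<lambda>_. 0, eps i, j) (\<lambda>_. 0, \<lambda>_. 0, i) = smul (-1) (bv (\<lambda>_. 0, \<lambda>_. 0, j) :: widx \<Rightarrow> 'a::field)"
proof -
  have e: "(\<lambda>k. eps i k + 0)(i := eps i i + 0 - 1) = (\<lambda>_. 0)" by (auto simp: eps_def)
  show ?thesis unfolding br_basis_def Let_def e by (auto simp: fun_eq_iff smul_def bv_def eps_def)
qed

lemma brB: "br_basis (\<lambda>_. 0, 2 * eps j, j) (\<lambda>_. 0, \<lambda>_. 0, j) = smul (-2) (bv (\<lambda>_. 0, eps j, j) :: widx \<Rightarrow> 'a::field)"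
proof -
  have e: "(\<lambda>k. (2 * eps j) k + 0)(j := (2 * eps j) j + 0 - 1) = eps j" by (auto simp: eps_def fun_eq_iff)
  show ?thesis unfolding br_basis_def Let_def e by (auto simp: fun_eq_iff smul_def bv_def eps_def)
qed

lemma brC: "br_basis (a, b, j) (\<lambda>_. 0, eps j, j) = smul (1 - of_int (b j)) (bv (a, b, j)) - smul (of_int (a j)) (bv (a, b + eps j, j) :: widx \<Rightarrow> 'a::field)"
proof -
  have e: "(\<lambda>k. b k + eps j k)(j := b j + eps j j - 1) = b" by (auto simp: eps_def fun_eq_iff)
  have e2: "(\<lambda>k. a k + 0) = a" "(\<lambda>k. b k + eps j k) = b + eps j" by auto
  show ?thesis unfolding br_basis_def Let_def e e2 by (auto simp: fun_eq_iff smul_def bv_def eps_def algebra_simps)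
qed

lemma brD: "br_basis (a, b + eps j, j) (\<lambda>_. 0, \<lambda>_. 0, j) = smul (- of_int (a j)) (bv (a, b + eps j, j)) - smul (of_int (b j + 1)) (bv (a, b, j) :: widx \<Rightarrow> 'a::field)"
proof -
  have e: "(\<lambda>k. (b + eps j) k + 0)(j := (b + eps j) j + 0 - 1) = b" by (auto simp: eps_def fun_eq_iff)
  have e2: "(\<lambda>k. a k + 0) = a" "(\<lambda>k. (b + eps j) k + 0) = b + eps j" by auto
  show ?thesis unfolding br_basis_def Let_def e e2 by (auto simp: fun_eq_iff smul_def bv_def eps_def algebra_simps)
qed

lemma bv_Wset: "p \<in> Bidx n m \<Longrightarrow> (bv p :: widx \<Rightarrow> 'a::field) \<in> Wset n m"
  unfolding Wset_def by (auto simp: supp_bv) (auto simp: bv_def split: if_splits)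

lemma eps_Bidx: "j < n + m \<Longrightarrow> (\<forall>k\<ge>n+m. b k = 0) \<Longrightarrow> (\<forall>k\<ge>n+m. (c * eps j + b) k = 0)"
  by (auto simp: eps_def)

theorem lemma2:
  fixes n m :: nat and I :: "(widx \<Rightarrow> 'a::field_char_0) set" and i :: nat
  assumes "is_W_ideal n m I"
    and "i < n + m"
    and "wpartial i \<in> I"
  shows "I = Wset n m"
proof
  note id = assms(1)[unfolded is_W_ideal_def]
  show "I \<subseteq> Wset n m" using id by blast
  have add: "u + v \<in> I" if "u \<in> I" "v \<in> I" for u v using id that by blast
  have sm: "smul c u \<in> I" if "u \<in> I" for u c using id that by blast
  have br: "wbracket w u \<in> I" if "w \<in> Wset n m" "u \<in> I" for w u using id that by blast
  have brb: "br_basis p q \<in> I" if "p \<in> Bidx n m" "bv q \<in> I" for p q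
    using br[OF bv_Wset[OF that(1)] that(2)] by (simp add: wbracket_bv)
  have smi: "smul c u \<in> I \<Longrightarrow> c \<noteq> 0 \<Longrightarrow> u \<in> I" for c u
    using sm[of "smul c u" "inverse c"] by (simp add: smul_def mult.assoc[symmetric])
  have dj: "bv (\<lambda>_. 0, \<lambda>_. 0, j) \<in> I" if "j < n + m" for j
  proof -
    have "br_basis (\<lambda>_. 0, eps i, j) (\<lambda>_. 0, \<lambda>_. 0, i) \<in> I"
      using brb assms(2,3) that by (auto simp: wpartial_def Bidx_def eps_def)
    then show ?thesis using smi by (simp add: brA)
  qed
  have ej: "bv (\<lambda>_. 0, eps j, j) \<in> I" if "j < n + m" for j
  proof -
    have "br_basis (\<lambda>_. 0, 2 * eps j, j) (\<lambda>_. 0, \<lambda>_. 0, j) \<in> I"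
      using brb dj that by (auto simp: Bidx_def eps_def)
    then show ?thesis using smi by (simp add: brB)
  qed
  have allb: "bv p \<in> I" if "p \<in> Bidx n m" for p
  proof -
    obtain a b j where p: "p = (a, b, j)" by (cases p) auto
    have j: "j < n + m" and pb: "(a, b + eps j, j) \<in> Bidx n m" using that p by (auto simp: Bidx_def eps_def)
    have C: "br_basis (a, b, j) (\<lambda>_. 0, eps j, j) \<in> I" using brb that p ej j by auto
    have D: "br_basis (a, b + eps j, j) (\<lambda>_. 0, \<lambda>_. 0, j) \<in> I" using brb pb dj j by auto
    have "br_basis (a, b, j) (\<lambda>_. 0, eps j, j) + smul (-1) (br_basis (a, b + eps j, j) (\<lambda>_. 0, \<lambda>_. 0, j))
       = smul (2::'a) (bv (a, b, j))"
      unfolding brC brD by (auto simp: fun_eq_iff smul_def algebra_simps)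
    then have "smul (2::'a) (bv (a, b, j)) \<in> I" using add[OF C sm[OF D]] by metis
    then show ?thesis using smi p by auto
  qed
  show "Wset n m \<subseteq> I"
  proof
    fix u :: "widx \<Rightarrow> 'a" assume u: "u \<in> Wset n m"
    define S where "S = {p. u p \<noteq> 0}"
    have fS: "finite S" and SB: "S \<subseteq> Bidx n m" using u by (auto simp: Wset_def S_def)
    have sumI: "(\<Sum>p\<in>T. smul (u p) (bv p)) \<in> I" if "finite T" "T \<subseteq> Bidx n m" for T
      using that
    proof (induction T rule: finite_induct)
      case empty then show ?case using id by (simp add: zero_fun_def)
    next
      case (insert x F)
      have "smul (u x) (bv x) + (\<Sum>p\<in>F. smul (u p) (bv p)) \<in> I"
        proof (rule add)
        show "smul (u x) (bv x) \<in> I" using insert(4) by (intro sm allb) simp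
        show "(\<Sum>p\<in>F. smul (u p) (bv p)) \<in> I" using insert(3,4) by simp
      qed
      then show ?case by (subst sum.insert[OF insert(1,2)])
    qed
    have eq: "(\<Sum>p\<in>S. smul (u p) (bv p)) = u"
    proof
      fix x
      have "(\<Sum>p\<in>S. smul (u p) (bv p)) x = (\<Sum>p\<in>S. u p * bv p x)"
        by (simp add: sum_fun_app[OF fS] smul_def)
      also have "\<dots> = (\<Sum>p\<in>S. if p = x then u x else 0)"
        by (rule sum.cong) (auto simp: bv_def)
      also have "\<dots> = u x" using fS by (auto simp: sum.delta' S_def)
      finally show "(\<Sum>p\<in>S. smul (u p) (bv p)) x = u x" .
    qed
    show "u \<in> I" using sumI[OF fS SB] unfolding eq .
  qed
qed

end
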